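(* Let $A$ and $B$ be hyperbolic elements in $\mathrm{Sp}(1,1)$ having a common fixed point on $\partial\mathbf H^1_{\mathbb H}$. Then (the images of) $A$ and $B$ form a strongly doubly reversible pair in $\mathrm{PSp}(1,1)$ if and only if $A$ and $B$ have the same fixed points.
   Context: $\mathrm{Sp}(1,1)$ is the group of $2\times 2$ quaternionic matrices preserving the Hermitian form $\langle \mathbf z,\mathbf w\rangle=\bar w_2 z_1+\bar w_1 z_2$ on the right $\mathbb H$-vector space $\mathbb H^2$, $\mathrm{PSp}(1,1)=\mathrm{Sp}(1,1)/\{\pm I\}$, and $\partial\mathbf H^1_{\mathbb H}$ is the set of right quaternionic lines of nonzero null vectors. An element is hyperbolic if it has exactly two fixed points on $\partial\mathbf H^1_{\mathbb H}$. A pair $(g_1,g_2)$ in $\mathrm{PSp}(1,1)$ is strongly doubly reversible if there is $g\in\mathrm{PSp}(1,1)$ with $g^2=1$, $g g_1 g^{-1}=g_1^{-1}$ and $g g_2 g^{-1}=g_2^{-1}$. *)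

theory Defs
  imports Main "HOL.Real"
begin

datatype quat = Quat (Re: real) (Im1: real) (Im2: real) (Im3: real)

definition qzero :: quat where "qzero = Quat 0 0 0 0"
definition qone :: quat where "qone = Quat 1 0 0 0"

definition qadd :: "quat \<Rightarrow> quat \<Rightarrow> quat" where
  "qadd p q = Quat (Re p + Re q) (Im1 p + Im1 q) (Im2 p + Im2 q) (Im3 p + Im3 q)"

definition qneg :: "quat \<Rightarrow> quat" where
  "qneg p = Quat (- Re p) (- Im1 p) (- Im2 p) (- Im3 p)"

definition qmul :: "quat \<Rightarrow> quat \<Rightarrow> quat" where
  "qmul p q = Quat
     (Re p * Re q - Im1 p * Im1 q - Im2 p * Im2 q - Im3 p * Im3 q)
     (Re p * Im1 q + Im1 p * Re q + Im2 p * Im3 q - Im3 p * Im2 q)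
     (Re p * Im2 q - Im1 p * Im3 q + Im2 p * Re q + Im3 p * Im1 q)
     (Re p * Im3 q + Im1 p * Im2 q - Im2 p * Im1 q + Im3 p * Re q)"

definition qcnj :: "quat \<Rightarrow> quat" where
  "qcnj p = Quat (Re p) (- Im1 p) (- Im2 p) (- Im3 p)"

type_synonym qvec = "quat \<times> quat"

definition vscale :: "qvec \<Rightarrow> quat \<Rightarrow> qvec" where
  "vscale z l = (qmul (fst z) l, qmul (snd z) l)"

definition vzero :: qvec where "vzero = (qzero, qzero)"

definition hform :: "qvec \<Rightarrow> qvec \<Rightarrow> quat" where
  "hform z w = qadd (qmul (qcnj (snd w)) (fst z)) (qmul (qcnj (fst w)) (snd z))"

text \<open>A 2x2 matrix [[a, b], [c, d]] is stored as the tuple (a, b, c, d).\<close>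
type_synonym qmat = "quat \<times> quat \<times> quat \<times> quat"

fun mat_e11 :: "qmat \<Rightarrow> quat" where "mat_e11 (a, b, c, d) = a"
fun mat_e12 :: "qmat \<Rightarrow> quat" where "mat_e12 (a, b, c, d) = b"
fun mat_e21 :: "qmat \<Rightarrow> quat" where "mat_e21 (a, b, c, d) = c"
fun mat_e22 :: "qmat \<Rightarrow> quat" where "mat_e22 (a, b, c, d) = d"

definition mat_one :: qmat where "mat_one = (qone, qzero, qzero, qone)"

definition mat_neg :: "qmat \<Rightarrow> qmat" where
  "mat_neg M = (qneg (mat_e11 M), qneg (mat_e12 M), qneg (mat_e21 M), qneg (mat_e22 M))"

definition mat_mul :: "qmat \<Rightarrow> qmat \<Rightarrow> qmat" where
  "mat_mul M N =
    (qadd (qmul (mat_e11 M) (mat_e11 N)) (qmul (mat_e12 M) (mat_e21 N)),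
     qadd (qmul (mat_e11 M) (mat_e12 N)) (qmul (mat_e12 M) (mat_e22 N)),
     qadd (qmul (mat_e21 M) (mat_e11 N)) (qmul (mat_e22 M) (mat_e21 N)),
     qadd (qmul (mat_e21 M) (mat_e12 N)) (qmul (mat_e22 M) (mat_e22 N)))"

text \<open>Matrix acting on a column vector (left action, commuting with right scalars).\<close>
definition mat_app :: "qmat \<Rightarrow> qvec \<Rightarrow> qvec" where
  "mat_app M z =
    (qadd (qmul (mat_e11 M) (fst z)) (qmul (mat_e12 M) (snd z)),
     qadd (qmul (mat_e21 M) (fst z)) (qmul (mat_e22 M) (snd z)))"

definition mat_invertible :: "qmat \<Rightarrow> bool" where
  "mat_invertible M \<longleftrightarrow> (\<exists>N. mat_mul M N = mat_one \<and> mat_mul N M = mat_one)"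

definition mat_inv :: "qmat \<Rightarrow> qmat" where
  "mat_inv M = (THE N. mat_mul M N = mat_one \<and> mat_mul N M = mat_one)"

definition Sp11 :: "qmat set" where
  "Sp11 = {M. mat_invertible M \<and> (\<forall>z w. hform (mat_app M z) (mat_app M w) = hform z w)}"

text \<open>Equality of images in PSp(1,1) = Sp(1,1)/{+-I}.\<close>
definition psp_eq :: "qmat \<Rightarrow> qmat \<Rightarrow> bool" where
  "psp_eq M N \<longleftrightarrow> M = N \<or> M = mat_neg N"

text \<open>Strongly doubly reversible pair (of the images of A, B) in PSp(1,1):
  some g in PSp(1,1) (lifted to Sp(1,1)) with g^2 = 1, g g1 g^-1 = g1^-1, g g2 g^-1 = g2^-1.\<close>
definition strongly_doubly_reversible :: "qmat \<Rightarrow> qmat \<Rightarrow> bool" where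
  "strongly_doubly_reversible A B \<longleftrightarrow>
     (\<exists>g\<in>Sp11. psp_eq (mat_mul g g) mat_one
        \<and> psp_eq (mat_mul (mat_mul g A) (mat_inv g)) (mat_inv A)
        \<and> psp_eq (mat_mul (mat_mul g B) (mat_inv g)) (mat_inv B))"

text \<open>Right quaternionic line spanned by a nonzero vector z (as the set of its nonzero vectors).\<close>
definition qline :: "qvec \<Rightarrow> qvec set" where
  "qline z = {vscale z l | l. l \<noteq> qzero}"

definition bdry :: "qvec set set" where
  "bdry = {qline z | z. z \<noteq> vzero \<and> hform z z = qzero}"

definition fixpts :: "qmat \<Rightarrow> qvec set set" where
  "fixpts M = {p \<in> bdry. \<exists>z. p = qline z \<and> qline (mat_app M z) = qline z}"

definition hyperbolic :: "qmat \<Rightarrow> bool" where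
  "hyperbolic M \<longleftrightarrow> finite (fixpts M) \<and> card (fixpts M) = 2"

end

theory Submission
  imports Defs
begin

definition nrm2 :: "quat \<Rightarrow> real" where
  "nrm2 p = (Re p)^2 + (Im1 p)^2 + (Im2 p)^2 + (Im3 p)^2"

lemma nrm2_nz: "a \<noteq> Quat 0 0 0 0 \<Longrightarrow> nrm2 a \<noteq> 0"
proof
  assume a: "a \<noteq> Quat 0 0 0 0" and "nrm2 a = 0"
  hence "Re a = 0 \<and> Im1 a = 0 \<and> Im2 a = 0 \<and> Im3 a = 0" unfolding nrm2_def
    by (smt (verit) sum_power2_eq_zero_iff zero_le_power2)
  with a show False by (cases a) simp
qed

instantiation quat :: division_ring
begin
definition "0 = Quat 0 0 0 0"
definition "1 = Quat 1 0 0 0"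
definition "p + q = Quat (Re p + Re q) (Im1 p + Im1 q) (Im2 p + Im2 q) (Im3 p + Im3 q)"
definition "- p = Quat (- Re p) (- Im1 p) (- Im2 p) (- Im3 p)"
definition "p - q = Quat (Re p - Re q) (Im1 p - Im1 q) (Im2 p - Im2 q) (Im3 p - Im3 q)"
definition "p * q = Quat
     (Re p * Re q - Im1 p * Im1 q - Im2 p * Im2 q - Im3 p * Im3 q)
     (Re p * Im1 q + Im1 p * Re q + Im2 p * Im3 q - Im3 p * Im2 q)
     (Re p * Im2 q - Im1 p * Im3 q + Im2 p * Re q + Im3 p * Im1 q)
     (Re p * Im3 q + Im1 p * Im2 q - Im2 p * Im1 q + Im3 p * Re q)"
definition "inverse p = Quat (Re p / nrm2 p) (- Im1 p / nrm2 p) (- Im2 p / nrm2 p) (- Im3 p / nrm2 p)"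
definition "divide p (q::quat) = p * inverse q"
instance
  apply intro_classes
  apply (simp_all add: times_quat_def plus_quat_def zero_quat_def one_quat_def uminus_quat_def
     minus_quat_def divide_quat_def inverse_quat_def algebra_simps)
  apply (drule nrm2_nz, simp add: nrm2_def add_divide_distrib[symmetric] diff_divide_distrib[symmetric] power2_eq_square algebra_simps)+
  done
end

lemmas qdefs = times_quat_def plus_quat_def zero_quat_def one_quat_def uminus_quat_def
     minus_quat_def inverse_quat_def

lemma qmul_eq: "qmul p q = p * q" by (simp add: qmul_def times_quat_def)
lemma qadd_eq: "qadd p q = p + q" by (simp add: qadd_def plus_quat_def)
lemma qzero_eq: "qzero = 0" by (simp add: qzero_def zero_quat_def)
lemma qone_eq: "qone = 1" by (simp add: qone_def one_quat_def)
lemma qneg_eq: "qneg p = - p" by (simp add: qneg_def uminus_quat_def)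
lemmas qbridge = qmul_eq qadd_eq qzero_eq qone_eq qneg_eq

lemma qcnj_mult: "qcnj (p * q) = qcnj q * qcnj p"
  by (simp add: qcnj_def times_quat_def algebra_simps)
lemma qcnj_add: "qcnj (p + q) = qcnj p + qcnj q"
  by (simp add: qcnj_def plus_quat_def algebra_simps)
lemma qcnj_minus: "qcnj (- q) = - qcnj q"
  by (simp add: qcnj_def uminus_quat_def)
lemma qcnj_diff: "qcnj (p - q) = qcnj p - qcnj q"
  by (simp add: qcnj_def minus_quat_def)
lemma qcnj_cnj[simp]: "qcnj (qcnj q) = q"
  by (simp add: qcnj_def)
lemma qcnj_0[simp]: "qcnj 0 = 0" by (simp add: qcnj_def zero_quat_def)
lemma qcnj_1[simp]: "qcnj 1 = 1" by (simp add: qcnj_def one_quat_def)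
lemma qcnj_eq0[simp]: "qcnj q = 0 \<longleftrightarrow> q = 0"
  by (cases q) (auto simp add: qcnj_def zero_quat_def)
lemma nrm2_ge0: "nrm2 p \<ge> 0" by (simp add: nrm2_def)
lemma nrm2_eq0[simp]: "nrm2 p = 0 \<longleftrightarrow> p = 0"
  using nrm2_nz[of p] by (auto simp: zero_quat_def nrm2_def)
lemma nrm2_0[simp]: "nrm2 0 = 0" by simp
lemma nrm2_mult: "nrm2 (p * q) = nrm2 p * nrm2 q"
  by (simp add: nrm2_def times_quat_def power2_eq_square algebra_simps)
lemma nrm2_1[simp]: "nrm2 1 = 1" by (simp add: nrm2_def one_quat_def)
lemma nrm2_minus[simp]: "nrm2 (- p) = nrm2 p" by (simp add: nrm2_def uminus_quat_def)
lemma nrm2_inverse: "nrm2 (inverse p) = inverse (nrm2 p)"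
proof (cases "p = 0")
  case True thus ?thesis by simp
next
  case False
  hence "nrm2 (inverse p) * nrm2 p = 1" by (simp flip: nrm2_mult)
  thus ?thesis using False by (simp add: field_simps)
qed
lemma qcnj_inverse: "qcnj (inverse p) = inverse (qcnj p)"
  by (simp add: qcnj_def inverse_quat_def nrm2_def)
lemma cnj_inv_unit: "nrm2 a = 1 \<Longrightarrow> qcnj (inverse a) = a"
  by (simp add: qcnj_def inverse_quat_def)

lemma perp_comm:
  assumes "Re y = 0" "Im1 y * Im1 x + Im2 y * Im2 x + Im3 y * Im3 x = 0"
  shows "y * x = qcnj x * y"
  using assms by (simp add: qcnj_def times_quat_def algebra_simps)

lemma real_comm:
  assumes "Im1 a = 0" "Im2 a = 0" "Im3 a = 0" shows "a * y = y * a"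
  using assms by (simp add: times_quat_def algebra_simps)

lemma exists_pure_comm: "\<exists>y. y \<noteq> 0 \<and> qcnj y = - y \<and> y * a = a * y"
proof (cases "Im1 a = 0 \<and> Im2 a = 0 \<and> Im3 a = 0")
  case True
  thus ?thesis by (intro exI[of _ "Quat 0 1 0 0"])
    (auto simp: zero_quat_def qcnj_def uminus_quat_def times_quat_def)
next
  case False
  thus ?thesis by (intro exI[of _ "Quat 0 (Im1 a) (Im2 a) (Im3 a)"])
    (auto simp: zero_quat_def qcnj_def uminus_quat_def times_quat_def algebra_simps)
qed

lemma left_solve: "(c::'a::division_ring) \<noteq> 0 \<Longrightarrow> c * x = y \<Longrightarrow> x = inverse c * y"
  by (metis left_inverse mult.assoc mult_1_left)

lemma vscale_eq: "vscale z l = (fst z * l, snd z * l)" by (simp add: vscale_def qmul_eq)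
lemma vzero_eq: "vzero = (0, 0)" by (simp add: vzero_def qzero_eq)
lemma hform_eq: "hform z w = qcnj (snd w) * fst z + qcnj (fst w) * snd z"
  by (simp add: hform_def qbridge)
lemma mat_app_eq: "mat_app M z = (mat_e11 M * fst z + mat_e12 M * snd z, mat_e21 M * fst z + mat_e22 M * snd z)"
  by (simp add: mat_app_def qbridge)

definition vadd :: "qvec \<Rightarrow> qvec \<Rightarrow> qvec" where
  "vadd z w = (fst z + fst w, snd z + snd w)"
definition vsub :: "qvec \<Rightarrow> qvec \<Rightarrow> qvec" where
  "vsub z w = (fst z - fst w, snd z - snd w)"

lemma hform_scale_l[simp]: "hform (vscale z l) w = hform z w * l"
  by (simp add: hform_eq vscale_eq algebra_simps)
lemma hform_scale_r[simp]: "hform z (vscale w m) = qcnj m * hform z w"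
  by (simp add: hform_eq vscale_eq algebra_simps qcnj_mult)
lemma hform_add_l[simp]: "hform (vadd z z') w = hform z w + hform z' w"
  by (simp add: hform_eq vadd_def algebra_simps)
lemma hform_add_r[simp]: "hform z (vadd w w') = hform z w + hform z w'"
  by (simp add: hform_eq vadd_def algebra_simps qcnj_add)
lemma hform_sub_l[simp]: "hform (vsub z z') w = hform z w - hform z' w"
  by (simp add: hform_eq vsub_def algebra_simps)
lemma hform_sym: "hform w z = qcnj (hform z w)"
  by (simp add: hform_eq qcnj_add qcnj_mult add.commute)
lemma mat_app_scale[simp]: "mat_app M (vscale z l) = vscale (mat_app M z) l"
  by (simp add: mat_app_eq vscale_eq algebra_simps)
lemma mat_app_add[simp]: "mat_app M (vadd z w) = vadd (mat_app M z) (mat_app M w)"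
  by (simp add: mat_app_eq vadd_def algebra_simps)
lemma mat_app_mul: "mat_app (mat_mul M N) z = mat_app M (mat_app N z)"
  by (cases M; cases N) (simp add: mat_app_eq mat_mul_def qbridge algebra_simps)
lemma mat_app_one[simp]: "mat_app mat_one z = z"
  by (simp add: mat_app_eq mat_one_def qbridge)
lemma mat_app_neg: "mat_app (mat_neg M) z = vscale (mat_app M z) (-1)"
  by (cases M) (simp add: mat_app_eq mat_neg_def vscale_eq qbridge algebra_simps)
lemma mat_ext: assumes "\<And>z. mat_app M z = mat_app N z" shows "M = N"
proof -
  obtain a b c d where M: "M = (a,b,c,d)" by (cases M) auto
  obtain a' b' c' d' where N: "N = (a',b',c',d')" by (cases N) auto
  from assms[of "(1,0)"] assms[of "(0,1)"] show ?thesis by (simp add: M N mat_app_eq)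
qed
lemma vscale_scale[simp]: "vscale (vscale z l) m = vscale z (l * m)"
  by (simp add: vscale_eq mult.assoc)
lemma vscale_1[simp]: "vscale z 1 = z" by (simp add: vscale_eq)
lemma vscale_cancel: assumes "z \<noteq> vzero" "vscale z l = vscale z m" shows "l = m"
proof -
  obtain z1 z2 where z: "z = (z1, z2)" by (cases z)
  show ?thesis
  proof (cases "z1 = 0")
    case True
    hence "z2 \<noteq> 0" using assms(1) z by (simp add: vzero_eq)
    moreover have "z2 * l = z2 * m" using assms(2) z by (simp add: vscale_eq)
    ultimately show ?thesis by simp
  next
    case False
    moreover have "z1 * l = z1 * m" using assms(2) z by (simp add: vscale_eq)
    ultimately show ?thesis by simp
  qed
qed

lemma perp:
  assumes u0: "u \<noteq> vzero" and uu: "hform u u = 0" and wu: "hform w u = 0"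
  shows "\<exists>m. w = vscale u m"
proof -
  obtain u1 u2 where u: "u = (u1, u2)" by (cases u)
  obtain w1 w2 where w: "w = (w1, w2)" by (cases w)
  have e1: "qcnj u2 * w1 + qcnj u1 * w2 = 0" using wu by (simp add: u w hform_eq)
  have e2: "qcnj u2 * u1 + qcnj u1 * u2 = 0" using uu by (simp add: u hform_eq)
  show ?thesis
  proof (cases "u1 = 0")
    case True
    hence u2: "u2 \<noteq> 0" using u0 u by (simp add: vzero_eq)
    hence "w1 = 0" using e1 True by simp
    thus ?thesis using u2 True
      by (intro exI[of _ "inverse u2 * w2"]) (simp add: u w vscale_eq mult.assoc[symmetric])
  next
    case False
    have c: "qcnj u1 \<noteq> 0" using False by simp
    have "qcnj u1 * w2 = - (qcnj u2 * w1)" using e1 by (simp add: eq_neg_iff_add_eq_0 add.commute)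
    hence h1: "w2 = inverse (qcnj u1) * (- (qcnj u2 * w1))" using left_solve[OF c] by blast
    have "qcnj u1 * u2 = - (qcnj u2 * u1)" using e2 by (simp add: eq_neg_iff_add_eq_0 add.commute)
    hence h2: "u2 = inverse (qcnj u1) * (- (qcnj u2 * u1))" using left_solve[OF c] by blast
    have h3: "u2 * inverse u1 = - (inverse (qcnj u1) * qcnj u2)"
    proof -
      have "u2 * inverse u1 = - (inverse (qcnj u1) * qcnj u2 * (u1 * inverse u1))"
        by (subst h2) (simp only: mult.assoc mult_minus_right mult_minus_left)
      thus ?thesis using False by simp
    qed
    have "u2 * (inverse u1 * w1) = w2"
      by (simp only: h1 mult.assoc[symmetric] h3) (simp only: mult.assoc mult_minus_right mult_minus_left)
    thus ?thesis using False
      by (intro exI[of _ "inverse u1 * w1"]) (simp add: u w vscale_eq mult.assoc[symmetric])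
  qed
qed

lemma vscale_0[simp]: "vscale z 0 = vzero" by (simp add: vscale_eq vzero_eq)
lemma vscale_nz: "z \<noteq> vzero \<Longrightarrow> m \<noteq> 0 \<Longrightarrow> vscale z m \<noteq> vzero"
  using vscale_cancel[of z m 0] by auto
lemma qline_alt: "qline z = {vscale z l | l. l \<noteq> 0}" by (simp add: qline_def qzero_eq)
lemma qline_mem: "z \<in> qline z"
  unfolding qline_alt by (auto intro: exI[of _ 1])
lemma qline_eqD: "qline z = qline w \<Longrightarrow> \<exists>m. m \<noteq> 0 \<and> w = vscale z m"
  using qline_mem[of w] unfolding qline_alt by auto
lemma qline_scale: assumes "m \<noteq> 0" shows "qline (vscale z m) = qline z"
proof
  show "qline (vscale z m) \<subseteq> qline z" unfolding qline_alt using assms by auto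
  show "qline z \<subseteq> qline (vscale z m)"
  proof
    fix x assume "x \<in> qline z"
    then obtain l where l: "l \<noteq> 0" "x = vscale z l" by (auto simp: qline_alt)
    have "x = vscale (vscale z m) (inverse m * l)"
      using assms l by (simp add: mult.assoc[symmetric])
    moreover have "inverse m * l \<noteq> 0" using l assms by simp
    ultimately show "x \<in> qline (vscale z m)" unfolding qline_alt by blast
  qed
qed

lemma FP_intro:
  assumes "z \<noteq> vzero" "hform z z = 0" "l \<noteq> 0" "mat_app M z = vscale z l"
  shows "qline z \<in> fixpts M"
proof -
  have "qline z \<in> bdry" unfolding bdry_def qzero_eq using assms(1,2) by blast
  moreover have "qline (mat_app M z) = qline z" using assms(3,4) qline_scale by simp
  ultimately show ?thesis unfolding fixpts_def by blast
qed

lemma FP_elim: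
  assumes "p \<in> fixpts M" shows "\<exists>z. z \<noteq> vzero \<and> hform z z = 0 \<and> p = qline z"
  using assms unfolding fixpts_def bdry_def by (auto simp: qzero_eq)

lemma FP_rep:
  assumes p: "p \<in> fixpts M" and pz: "p = qline z" and z0: "z \<noteq> vzero"
  shows "\<exists>l. l \<noteq> 0 \<and> mat_app M z = vscale z l"
proof -
  obtain z' where pz': "p = qline z'" and fz: "qline (mat_app M z') = qline z'"
    using p unfolding fixpts_def by auto
  obtain m where m: "m \<noteq> 0" "z' = vscale z m" using qline_eqD[of z z'] pz pz' by auto
  obtain k where k: "k \<noteq> 0" "z' = vscale (mat_app M z') k" using qline_eqD[OF fz] by auto
  have "mat_app M z' = vscale z' (inverse k)"
    using k by (metis right_inverse vscale_1 vscale_scale)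
  hence "vscale (mat_app M z) m = vscale z (m * inverse k)" using m by simp
  hence "vscale (vscale (mat_app M z) m) (inverse m) = vscale z (m * inverse k * inverse m)" by simp
  hence "mat_app M z = vscale z (m * inverse k * inverse m)" using m by simp
  moreover have "m * inverse k * inverse m \<noteq> 0" using m k by simp
  ultimately show ?thesis by blast
qed

lemma mat_inv_eq:
  assumes "mat_mul M N = mat_one" "mat_mul N M = mat_one" shows "mat_inv M = N"
  unfolding mat_inv_def
proof (rule the_equality)
  show "mat_mul M N = mat_one \<and> mat_mul N M = mat_one" using assms by simp
  fix N' assume h: "mat_mul M N' = mat_one \<and> mat_mul N' M = mat_one"
  show "N' = N"
  proof (rule mat_ext)
    fix z
    have "mat_app N' z = mat_app N' (mat_app M (mat_app N z))"
      using assms(1) by (metis mat_app_mul mat_app_one)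
    also have "\<dots> = mat_app N z" using h by (metis mat_app_mul mat_app_one)
    finally show "mat_app N' z = mat_app N z" .
  qed
qed

lemma Sp11_inv:
  assumes "M \<in> Sp11"
  shows "mat_mul M (mat_inv M) = mat_one \<and> mat_mul (mat_inv M) M = mat_one"
proof -
  obtain N where "mat_mul M N = mat_one" "mat_mul N M = mat_one"
    using assms unfolding Sp11_def mat_invertible_def by auto
  thus ?thesis using mat_inv_eq by simp
qed
lemma Sp11_app_inv1: "M \<in> Sp11 \<Longrightarrow> mat_app M (mat_app (mat_inv M) z) = z"
  by (metis Sp11_inv mat_app_mul mat_app_one)
lemma Sp11_app_inv2: "M \<in> Sp11 \<Longrightarrow> mat_app (mat_inv M) (mat_app M z) = z"
  by (metis Sp11_inv mat_app_mul mat_app_one)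
lemma Sp11_form: assumes "M \<in> Sp11" shows "hform (mat_app M z) (mat_app M w) = hform z w"
proof -
  have "\<forall>z w. hform (mat_app M z) (mat_app M w) = hform z w" using assms unfolding Sp11_def by simp
  thus ?thesis by (rule allE) (erule allE)
qed
lemma mat_app_zero[simp]: "mat_app M vzero = vzero"
  by (simp add: mat_app_eq vzero_eq)
lemma Sp11_nz: "M \<in> Sp11 \<Longrightarrow> z \<noteq> vzero \<Longrightarrow> mat_app M z \<noteq> vzero"
  by (metis Sp11_app_inv2 mat_app_zero)

lemma inv_eig: assumes "M \<in> Sp11" "l \<noteq> 0" "mat_app M z = vscale z l"
  shows "mat_app (mat_inv M) z = vscale z (inverse l)"
proof -
  have "z = vscale (mat_app (mat_inv M) z) l" using assms Sp11_app_inv2[of M z] by simp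
  hence "vscale z (inverse l) = vscale (mat_app (mat_inv M) z) (l * inverse l)" by (metis vscale_scale)
  thus ?thesis using assms by simp
qed

lemma hform_zero_l[simp]: "hform vzero w = 0" by (simp add: hform_eq vzero_eq)
lemma vadd_scale: "vscale (vadd z w) l = vadd (vscale z l) (vscale w l)"
  by (simp add: vadd_def vscale_eq algebra_simps)
lemma vadd_zero_l[simp]: "vadd vzero z = z" by (simp add: vadd_def vzero_eq)
lemma vadd_zero_r[simp]: "vadd z vzero = z" by (simp add: vadd_def vzero_eq)
lemma vadd_comm: "vadd z w = vadd w z" by (simp add: vadd_def add.commute)

lemma nonorth:
  assumes "u \<noteq> vzero" "hform u u = 0" "v \<noteq> vzero" "qline u \<noteq> qline v"
  shows "hform u v \<noteq> 0"
proof
  assume "hform u v = 0"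
  hence "hform v u = 0" by (metis hform_sym qcnj_0)
  then obtain m where m: "v = vscale u m" using perp assms by blast
  hence "m \<noteq> 0" using assms(3) by auto
  thus False using m qline_scale assms(4) by metis
qed

lemma spanning:
  assumes uu: "hform u u = 0" and vv: "hform v v = 0" and uv: "hform u v = 1"
  shows "z = vadd (vscale u (hform z v)) (vscale v (hform z u))"
proof -
  have vu: "hform v u = 1" using uv by (metis hform_sym qcnj_1)
  have u0: "u \<noteq> vzero" using uv by auto
  define w where "w = vsub z (vadd (vscale u (hform z v)) (vscale v (hform z u)))"
  have "hform w u = 0" unfolding w_def by (simp add: uu vu)
  then obtain m where m: "w = vscale u m" using perp[OF u0 uu] by blast
  have "hform w v = 0" unfolding w_def by (simp add: vv uv)
  hence "m = 0" using m uv by simp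
  hence "w = vzero" using m by simp
  thus ?thesis unfolding w_def by (simp add: vsub_def vzero_eq vadd_def prod_eq_iff)
qed

lemma mat_app_lin: "mat_app M (vadd (vscale u a) (vscale v b)) = vadd (vscale (mat_app M u) a) (vscale (mat_app M v) b)"
  by simp

lemma basis_ext:
  assumes uu: "hform u u = 0" and vv: "hform v v = 0" and uv: "hform u v = 1"
    and "mat_app M u = mat_app N u" "mat_app M v = mat_app N v"
  shows "M = N"
proof (rule mat_ext)
  fix z
  have "mat_app M z = mat_app M (vadd (vscale u (hform z v)) (vscale v (hform z u)))"
    using spanning[OF uu vv uv, of z] by simp
  also have "\<dots> = mat_app N (vadd (vscale u (hform z v)) (vscale v (hform z u)))"
    using assms(4,5) by simp
  also have "\<dots> = mat_app N z" using spanning[OF uu vv uv, of z] by simp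
  finally show "mat_app M z = mat_app N z" .
qed

lemma rev_eq:
  assumes g: "g \<in> Sp11" and h: "psp_eq (mat_mul (mat_mul g A) (mat_inv g)) (mat_inv A)"
  shows "\<exists>\<epsilon>. (\<epsilon> = 1 \<or> \<epsilon> = -1) \<and> (\<forall>w. mat_app g (mat_app A w) = vscale (mat_app (mat_inv A) (mat_app g w)) \<epsilon>)"
proof -
  have k: "mat_app (mat_mul (mat_mul g A) (mat_inv g)) (mat_app g w) = mat_app g (mat_app A w)" for w
    using g by (simp add: mat_app_mul Sp11_app_inv2)
  from h show ?thesis unfolding psp_eq_def
  proof
    assume e: "mat_mul (mat_mul g A) (mat_inv g) = mat_inv A"
    show ?thesis by (rule exI[of _ 1]) (metis k e vscale_1)
  next
    assume e: "mat_mul (mat_mul g A) (mat_inv g) = mat_neg (mat_inv A)"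
    show ?thesis by (rule exI[of _ "-1"]) (metis k e mat_app_neg)
  qed
qed

lemma rev_fix:
  assumes A: "A \<in> Sp11" and g: "g \<in> Sp11"
    and h: "psp_eq (mat_mul (mat_mul g A) (mat_inv g)) (mat_inv A)"
    and z: "z \<noteq> vzero" "hform z z = 0" and l: "l \<noteq> 0" "mat_app A z = vscale z l"
  shows "qline (mat_app g z) \<in> fixpts A"
proof -
  obtain \<epsilon> where e: "\<epsilon> = 1 \<or> \<epsilon> = -1"
    and r: "\<And>w. mat_app g (mat_app A w) = vscale (mat_app (mat_inv A) (mat_app g w)) \<epsilon>"
    using rev_eq[OF g h] by blast
  have ee: "\<epsilon> * \<epsilon> = 1" using e by auto
  have "vscale (mat_app g z) l = vscale (mat_app (mat_inv A) (mat_app g z)) \<epsilon>"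
    using r[of z] l by simp
  hence "vscale (mat_app g z) (l * \<epsilon>) = mat_app (mat_inv A) (mat_app g z)"
    by (metis ee vscale_1 vscale_scale)
  hence "mat_app A (vscale (mat_app g z) (l * \<epsilon>)) = mat_app g z"
    using A by (metis Sp11_app_inv1)
  hence "vscale (mat_app A (mat_app g z)) (l * \<epsilon>) = mat_app g z" by simp
  hence "vscale (mat_app A (mat_app g z)) (l * \<epsilon> * inverse (l * \<epsilon>)) = vscale (mat_app g z) (inverse (l * \<epsilon>))"
    by (metis vscale_scale)
  moreover have le: "l * \<epsilon> \<noteq> 0" using l e by auto
  ultimately have "mat_app A (mat_app g z) = vscale (mat_app g z) (inverse (l * \<epsilon>))" by simp
  moreover have "inverse (l * \<epsilon>) \<noteq> 0" using le by simp
  ultimately show ?thesis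
    using FP_intro Sp11_nz[OF g z(1)] Sp11_form[OF g] z(2) by metis
qed

lemma dir1:
  assumes A: "A \<in> Sp11" and g: "g \<in> Sp11"
    and h: "psp_eq (mat_mul (mat_mul g A) (mat_inv g)) (mat_inv A)"
    and u: "u \<noteq> vzero" "hform u u = 0" and v: "v \<noteq> vzero" "hform v v = 0"
    and uv: "qline u \<noteq> qline v" and fA: "fixpts A = {qline u, qline v}"
    and p: "p \<noteq> 0" "mat_app g u = vscale u p"
  shows False
proof -
  obtain a where a: "a \<noteq> 0" "mat_app A u = vscale u a" using FP_rep[of "qline u" A u] fA u by auto
  obtain d where d: "d \<noteq> 0" "mat_app A v = vscale v d" using FP_rep[of "qline v" A v] fA v by auto
  obtain \<epsilon> where e: "\<epsilon> = 1 \<or> \<epsilon> = -1"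
    and r: "\<And>w. mat_app g (mat_app A w) = vscale (mat_app (mat_inv A) (mat_app g w)) \<epsilon>"
    using rev_eq[OF g h] by blast
  have "vscale u (p * a) = vscale u (inverse a * p * \<epsilon>)"
    using r[of u] a p inv_eig[OF A a(1) a(2)] by (simp add: mult.assoc)
  hence pa: "p * a = inverse a * p * \<epsilon>" using vscale_cancel u by blast
  have ne: "nrm2 \<epsilon> = 1" using e by auto
  have "nrm2 p * nrm2 a = inverse (nrm2 a) * nrm2 p"
    using arg_cong[OF pa, of nrm2] ne by (simp add: nrm2_mult nrm2_inverse)
  hence "nrm2 a * nrm2 a = 1" using p a by (simp add: field_simps)
  hence "(nrm2 a - 1) * (nrm2 a + 1) = 0" by (simp add: algebra_simps)
  moreover have "nrm2 a + 1 \<noteq> 0" using nrm2_ge0[of a] by linarith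
  ultimately have na: "nrm2 a = 1" by simp
  define c where "c = hform u v"
  have c0: "c \<noteq> 0" unfolding c_def using nonorth u v uv by blast
  have "hform (mat_app A u) (mat_app A v) = c" unfolding c_def using Sp11_form[OF A] .
  hence cd: "qcnj d * (c * a) = c" using a d unfolding c_def by simp
  have cdd: "qcnj d = c * inverse a * inverse c"
  proof -
    have "qcnj d * c * a * inverse a * inverse c = c * inverse a * inverse c" using cd by (simp add: mult.assoc)
    thus ?thesis using a c0 by (simp add: mult.assoc)
  qed
  have dd: "d = inverse (qcnj c) * a * qcnj c"
  proof -
    have "d = qcnj (qcnj d)" by simp
    also have "\<dots> = qcnj (inverse c) * qcnj (inverse a) * qcnj c" by (simp add: cdd qcnj_mult mult.assoc)
    also have "\<dots> = inverse (qcnj c) * a * qcnj c" by (simp add: qcnj_inverse[of c] cnj_inv_unit[OF na])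
    finally show ?thesis .
  qed
  obtain y where y: "y \<noteq> 0" "qcnj y = - y" "y * a = a * y" using exists_pure_comm by blast
  define x where "x = inverse (qcnj c) * y"
  have cc: "qcnj c \<noteq> 0" using c0 by simp
  have dx: "d * x = x * a"
  proof -
    have "d * x = inverse (qcnj c) * a * (qcnj c * inverse (qcnj c)) * y" by (simp add: dd x_def mult.assoc)
    also have "\<dots> = inverse (qcnj c) * (a * y)" using cc by (simp add: mult.assoc)
    also have "\<dots> = x * a" by (simp add: x_def y(3)[symmetric] mult.assoc)
    finally show ?thesis .
  qed
  have vu: "hform v u = qcnj c" unfolding c_def by (metis hform_sym)
  have cx: "qcnj c * x = y" unfolding x_def using cc by (simp add: mult.assoc[symmetric])
  have xc: "qcnj x * c = - y" unfolding x_def using c0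
    by (simp add: qcnj_mult qcnj_inverse mult.assoc y(2))
  define w where "w = vadd u (vscale v x)"
  have wu: "hform w u = y" unfolding w_def using u v by (simp add: vu cx)
  have wv: "hform w v = c" unfolding w_def using u v by (simp add: c_def)
  have ww: "hform w w = 0" unfolding w_def using u v
    by (simp add: vu cx c_def[symmetric] mult.assoc[symmetric] xc)
  have w0: "w \<noteq> vzero" using wu y by auto
  have Aw: "mat_app A w = vscale w a"
    unfolding w_def using a d by (simp add: vadd_scale mult.assoc[symmetric] dx)
  have wf: "qline w \<in> fixpts A" using FP_intro[OF w0 ww a(1) Aw] .
  have n1: "qline w \<noteq> qline u"
  proof
    assume "qline w = qline u"
    then obtain m where "w = vscale u m" using qline_eqD by metis
    hence "hform w u = 0" using u by simp
    thus False using wu y by simp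
  qed
  have n2: "qline w \<noteq> qline v"
  proof
    assume "qline w = qline v"
    then obtain m where "w = vscale v m" using qline_eqD by metis
    hence "hform w v = 0" using v by simp
    thus False using wv c0 by simp
  qed
  show False using wf n1 n2 fA by auto
qed

lemma exists_mat: "\<exists>G. \<forall>z. mat_app G z = vadd (vscale u (p * hform z u)) (vscale v (q * hform z v))"
proof -
  obtain u1 u2 where u: "u = (u1, u2)" by (cases u)
  obtain v1 v2 where v: "v = (v1, v2)" by (cases v)
  show ?thesis
    by (rule exI[of _ "(u1 * p * qcnj u2 + v1 * q * qcnj v2, u1 * p * qcnj u1 + v1 * q * qcnj v1,
                       u2 * p * qcnj u2 + v2 * q * qcnj v2, u2 * p * qcnj u1 + v2 * q * qcnj v1)"])
      (simp add: u v mat_app_eq hform_eq vadd_def vscale_eq algebra_simps)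
qed

lemma G_props:
  assumes uu: "hform u u = 0" and vv: "hform v v = 0" and uv: "hform u v = 1"
    and pq: "p * q = -1" "q * p = -1" "qcnj q * p = 1" "qcnj p * q = 1"
    and G: "\<And>z. mat_app G z = vadd (vscale u (p * hform z u)) (vscale v (q * hform z v))"
  shows "mat_app G u = vscale v q" "mat_app G v = vscale u p"
    "mat_mul G G = mat_neg mat_one" "mat_inv G = mat_neg G" "G \<in> Sp11"
proof -
  have vu: "hform v u = 1" using uv by (metis hform_sym qcnj_1)
  show Gu: "mat_app G u = vscale v q" using G[of u] uu uv by simp
  show Gv: "mat_app G v = vscale u p" using G[of v] vv vu by simp
  have GGu: "mat_app G (mat_app G u) = vscale u (-1)" using Gu Gv pq by simp
  have GGv: "mat_app G (mat_app G v) = vscale v (-1)" using Gu Gv pq by simp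
  show GG: "mat_mul G G = mat_neg mat_one"
    by (rule basis_ext[OF uu vv uv]) (simp_all add: mat_app_mul mat_app_neg GGu GGv)
  have i1: "mat_mul G (mat_neg G) = mat_one"
    by (rule basis_ext[OF uu vv uv]) (simp_all add: mat_app_mul mat_app_neg GGu GGv)
  have i2: "mat_mul (mat_neg G) G = mat_one"
    by (rule basis_ext[OF uu vv uv]) (simp_all add: mat_app_mul mat_app_neg GGu GGv)
  show "mat_inv G = mat_neg G" using mat_inv_eq[OF i1 i2] .
  have inv: "mat_invertible G" unfolding mat_invertible_def using i1 i2 by blast
  have form: "hform (mat_app G z) (mat_app G w) = hform z w" for z w
  proof -
    obtain \<alpha> \<beta> where z: "z = vadd (vscale u \<alpha>) (vscale v \<beta>)"
      using spanning[OF uu vv uv, of z] by blast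
    obtain \<alpha>' \<beta>' where w: "w = vadd (vscale u \<alpha>') (vscale v \<beta>')"
      using spanning[OF uu vv uv, of w] by blast
    have Gz: "mat_app G z = vadd (vscale v (q * \<alpha>)) (vscale u (p * \<beta>))"
      unfolding z by (simp add: Gu Gv)
    have Gw: "mat_app G w = vadd (vscale v (q * \<alpha>')) (vscale u (p * \<beta>'))"
      unfolding w by (simp add: Gu Gv)
    have "hform (mat_app G z) (mat_app G w) = qcnj \<alpha>' * (qcnj q * p) * \<beta> + qcnj \<beta>' * (qcnj p * q) * \<alpha>"
      unfolding Gz Gw by (simp add: uu vv uv vu qcnj_mult mult.assoc)
    also have "\<dots> = qcnj \<alpha>' * \<beta> + qcnj \<beta>' * \<alpha>" using pq by simp
    also have "\<dots> = hform z w" unfolding z w by (simp add: uu vv uv vu)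
    finally show ?thesis .
  qed
  show "G \<in> Sp11" unfolding Sp11_def using inv form by blast
qed

lemma perp3: "\<exists>y1 y2 y3::real. (y1 \<noteq> 0 \<or> y2 \<noteq> 0 \<or> y3 \<noteq> 0) \<and>
   y1 * a1 + y2 * a2 + y3 * a3 = 0 \<and> y1 * b1 + y2 * b2 + y3 * b3 = 0"
proof -
  define c1 where "c1 = a2 * b3 - a3 * b2"
  define c2 where "c2 = a3 * b1 - a1 * b3"
  define c3 where "c3 = a1 * b2 - a2 * b1"
  show ?thesis
  proof (cases "c1 \<noteq> 0 \<or> c2 \<noteq> 0 \<or> c3 \<noteq> 0")
    case True
    show ?thesis
      by (rule exI[of _ c1], rule exI[of _ c2], rule exI[of _ c3])
        (use True in \<open>simp add: c1_def c2_def c3_def algebra_simps\<close>)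
  next
    case False
    hence cs: "c1 = 0" "c2 = 0" "c3 = 0" by auto
    show ?thesis
    proof (cases "a1 \<noteq> 0 \<or> a2 \<noteq> 0 \<or> a3 \<noteq> 0")
      case True
      then consider "a1 \<noteq> 0" | "a2 \<noteq> 0" | "a3 \<noteq> 0" by blast
      thus ?thesis
      proof cases
        case 1 thus ?thesis using cs
          by (intro exI[of _ "-a3"] exI[of _ 0] exI[of _ a1]) (simp add: c2_def algebra_simps)
      next
        case 2 thus ?thesis using cs
          by (intro exI[of _ a2] exI[of _ "-a1"] exI[of _ 0]) (simp add: c3_def algebra_simps)
      next
        case 3 thus ?thesis using cs
          by (intro exI[of _ 0] exI[of _ a3] exI[of _ "-a2"]) (simp add: c1_def algebra_simps)
      qed
    next
      case False
      hence az: "a1 = 0" "a2 = 0" "a3 = 0" by auto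
      show ?thesis
      proof (cases "b1 \<noteq> 0 \<or> b2 \<noteq> 0 \<or> b3 \<noteq> 0")
        case True
        then consider "b1 \<noteq> 0" | "b2 \<noteq> 0" | "b3 \<noteq> 0" by blast
        thus ?thesis
        proof cases
          case 1 thus ?thesis using az
            by (intro exI[of _ "-b3"] exI[of _ 0] exI[of _ b1]) (simp add: algebra_simps)
        next
          case 2 thus ?thesis using az
            by (intro exI[of _ b2] exI[of _ "-b1"] exI[of _ 0]) (simp add: algebra_simps)
        next
          case 3 thus ?thesis using az
            by (intro exI[of _ 0] exI[of _ b3] exI[of _ "-b2"]) (simp add: algebra_simps)
        qed
      next
        case False
        thus ?thesis using az by (intro exI[of _ 1] exI[of _ 0] exI[of _ 0]) simp
      qed
    qed
  qed
qed

definition qdot :: "quat \<Rightarrow> quat \<Rightarrow> real" where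
  "qdot y x = Im1 y * Im1 x + Im2 y * Im2 x + Im3 y * Im3 x"

lemma exists_perp: "\<exists>y. y \<noteq> 0 \<and> Re y = 0 \<and> qdot y a = 0 \<and> qdot y b = 0"
proof -
  obtain y1 y2 y3 where y: "y1 \<noteq> 0 \<or> y2 \<noteq> 0 \<or> y3 \<noteq> 0"
    "y1 * Im1 a + y2 * Im2 a + y3 * Im3 a = 0" "y1 * Im1 b + y2 * Im2 b + y3 * Im3 b = 0"
    using perp3 by blast
  show ?thesis using y
    by (intro exI[of _ "Quat 0 y1 y2 y3"]) (auto simp: qdot_def zero_quat_def)
qed

lemma qdot_cnj: "qdot y (qcnj a) = - qdot y a" by (simp add: qdot_def qcnj_def)
lemma qdot_invcnj: "qdot y a = 0 \<Longrightarrow> qdot y (inverse (qcnj a)) = 0"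
  by (simp add: qdot_def qcnj_def inverse_quat_def add_divide_distrib[symmetric] times_divide_eq_right)




lemma dir2:
  assumes A: "A \<in> Sp11" and B: "B \<in> Sp11"
    and u: "u \<noteq> vzero" "hform u u = 0" and v: "v \<noteq> vzero" "hform v v = 0"
    and uv: "qline u \<noteq> qline v" and fA: "fixpts A = {qline u, qline v}"
    and fB: "fixpts B = {qline u, qline v}"
  shows "strongly_doubly_reversible A B"
proof -
  define c where "c = hform u v"
  have c0: "c \<noteq> 0" unfolding c_def using nonorth u v uv by blast
  define v' where "v' = vscale v (qcnj (inverse c))"
  have mz: "qcnj (inverse c) \<noteq> 0" using c0 by simp
  have v'0: "v' \<noteq> vzero" unfolding v'_def using vscale_nz[OF v(1) mz] .
  have v'v': "hform v' v' = 0" unfolding v'_def using v by simp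
  have uv': "hform u v' = 1" unfolding v'_def using c0 by (simp add: c_def[symmetric])
  have qv': "qline v' = qline v" unfolding v'_def using qline_scale[OF mz] .
  obtain a where a: "a \<noteq> 0" "mat_app A u = vscale u a" using FP_rep[of "qline u" A u] fA u by auto
  obtain d where d: "d \<noteq> 0" "mat_app A v' = vscale v' d" using FP_rep[of "qline v'" A v'] fA v'0 qv' by auto
  obtain b where b: "b \<noteq> 0" "mat_app B u = vscale u b" using FP_rep[of "qline u" B u] fB u by auto
  obtain e where e: "e \<noteq> 0" "mat_app B v' = vscale v' e" using FP_rep[of "qline v'" B v'] fB v'0 qv' by auto
  have "hform (mat_app A u) (mat_app A v') = 1" using Sp11_form[OF A] uv' by simp
  hence da: "qcnj d * a = 1" using a d uv' by simp
  have "hform (mat_app B u) (mat_app B v') = 1" using Sp11_form[OF B] uv' by simp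
  hence eb: "qcnj e * b = 1" using b e uv' by simp
  have dinv: "d = inverse (qcnj a)"
  proof -
    have "inverse (qcnj d) = a" using da by (rule inverse_unique)
    hence "qcnj d = inverse a" by (metis inverse_inverse_eq)
    hence "d = qcnj (inverse a)" by (metis qcnj_cnj)
    thus ?thesis by (simp add: qcnj_inverse)
  qed
  have einv: "e = inverse (qcnj b)"
  proof -
    have "inverse (qcnj e) = b" using eb by (rule inverse_unique)
    hence "qcnj e = inverse b" by (metis inverse_inverse_eq)
    hence "e = qcnj (inverse b)" by (metis qcnj_cnj)
    thus ?thesis by (simp add: qcnj_inverse)
  qed
  obtain y where y: "y \<noteq> 0" "Re y = 0" "qdot y a = 0" "qdot y b = 0" using exists_perp by blast
  have cy: "qcnj y = - y" using y(2) by (simp add: qcnj_def uminus_quat_def)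
  define p where "p = y"
  define q where "q = - inverse y"
  have pq: "p * q = -1" "q * p = -1" "qcnj q * p = 1" "qcnj p * q = 1"
    using y(1) cy by (simp_all add: p_def q_def qcnj_minus qcnj_inverse)
  obtain G where G: "\<And>z. mat_app G z = vadd (vscale u (p * hform z u)) (vscale v' (q * hform z v'))"
    using exists_mat by blast
  note GP = G_props[OF u(2) v'v' uv' pq G]
  have comm: "y * x = qcnj x * y" if "qdot y x = 0" for x
    using perp_comm[OF y(2)] that by (simp add: qdot_def)
  have rev: "mat_mul (mat_mul G M) (mat_inv G) = mat_inv M"
    if M: "M \<in> Sp11" and m: "m \<noteq> 0" "mat_app M u = vscale u m"
      and n: "n \<noteq> 0" "mat_app M v' = vscale v' n" and nm: "n = inverse (qcnj m)"
      and ym: "qdot y m = 0" for M m n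
  proof (rule basis_ext[OF u(2) v'v' uv'])
    have yn: "y * n = qcnj n * y" using comm qdot_invcnj[OF ym] nm by simp
    have ym': "y * qcnj m = m * y" using comm[of "qcnj m"] qdot_cnj[of y m] ym by simp
    have cn: "qcnj n = inverse m" using nm by (simp add: qcnj_inverse)
    have "mat_app (mat_mul (mat_mul G M) (mat_inv G)) u = vscale u (- (p * n * q))"
      using GP m n by (simp add: mat_app_mul mat_app_neg mult.assoc)
    also have "- (p * n * q) = inverse m"
      using y(1) by (simp add: p_def q_def yn cn mult.assoc)
    finally show "mat_app (mat_mul (mat_mul G M) (mat_inv G)) u = mat_app (mat_inv M) u"
      using inv_eig[OF M m] by simp
    have "mat_app (mat_mul (mat_mul G M) (mat_inv G)) v' = vscale v' (- (q * m * p))"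
      using GP m n by (simp add: mat_app_mul mat_app_neg mult.assoc)
    also have "- (q * m * p) = inverse n"
    proof -
      have "- (q * m * p) = inverse y * (m * y)" by (simp add: p_def q_def mult.assoc)
      also have "\<dots> = qcnj m" using y(1) by (simp add: ym'[symmetric] mult.assoc[symmetric])
      also have "\<dots> = inverse n" using nm by simp
      finally show ?thesis .
    qed
    finally show "mat_app (mat_mul (mat_mul G M) (mat_inv G)) v' = mat_app (mat_inv M) v'"
      using inv_eig[OF M n] by simp
  qed
  show ?thesis unfolding strongly_doubly_reversible_def
  proof (intro bexI[of _ G] conjI)
    show "G \<in> Sp11" using GP by simp
    show "psp_eq (mat_mul G G) mat_one" using GP unfolding psp_eq_def by simp
    show "psp_eq (mat_mul (mat_mul G A) (mat_inv G)) (mat_inv A)"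
      unfolding psp_eq_def using rev[OF A a d dinv y(3)] by simp
    show "psp_eq (mat_mul (mat_mul G B) (mat_inv G)) (mat_inv B)"
      unfolding psp_eq_def using rev[OF B b e einv y(4)] by simp
  qed
qed
lemma card2_split:
  assumes "finite S" "card S = 2" "P \<in> S" shows "\<exists>X. X \<noteq> P \<and> S = {P, X}"
proof -
  obtain x y where xy: "S = {x, y}" "x \<noteq> y" using assms(2) unfolding card_2_iff by auto
  show ?thesis
  proof (cases "P = x")
    case True thus ?thesis using xy by auto
  next
    case False hence "P = y" using xy assms(3) by auto
    thus ?thesis using xy by (intro exI[of _ x]) auto
  qed
qed

theorem proposition6p1:
  assumes "A \<in> Sp11" and "B \<in> Sp11"
    and "hyperbolic A" and "hyperbolic B"
    and "fixpts A \<inter> fixpts B \<noteq> {}"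
  shows "strongly_doubly_reversible A B \<longleftrightarrow> fixpts A = fixpts B"
proof
  assume sdr: "strongly_doubly_reversible A B"
  show "fixpts A = fixpts B"
  proof (rule ccontr)
    assume ne: "fixpts A \<noteq> fixpts B"
    obtain P where P: "P \<in> fixpts A" "P \<in> fixpts B" using assms(5) by blast
    obtain X where X: "X \<noteq> P" "fixpts A = {P, X}"
      using card2_split[OF _ _ P(1)] assms(3) unfolding hyperbolic_def by blast
    obtain Y where Y: "Y \<noteq> P" "fixpts B = {P, Y}"
      using card2_split[OF _ _ P(2)] assms(4) unfolding hyperbolic_def by blast
    have XY: "X \<noteq> Y" using X Y ne by blast
    obtain u where u: "u \<noteq> vzero" "hform u u = 0" "P = qline u" using FP_elim[OF P(1)] by blast
    obtain v where v: "v \<noteq> vzero" "hform v v = 0" "X = qline v"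
      using FP_elim[of X A] X by blast
    obtain g where g: "g \<in> Sp11"
      "psp_eq (mat_mul (mat_mul g A) (mat_inv g)) (mat_inv A)"
      "psp_eq (mat_mul (mat_mul g B) (mat_inv g)) (mat_inv B)"
      using sdr unfolding strongly_doubly_reversible_def by blast
    obtain a where a: "a \<noteq> 0" "mat_app A u = vscale u a" using FP_rep[OF P(1) u(3) u(1)] by blast
    obtain b where b: "b \<noteq> 0" "mat_app B u = vscale u b" using FP_rep[OF P(2) u(3) u(1)] by blast
    have gA: "qline (mat_app g u) \<in> fixpts A" using rev_fix[OF assms(1) g(1) g(2) u(1,2) a] .
    have gB: "qline (mat_app g u) \<in> fixpts B" using rev_fix[OF assms(2) g(1) g(3) u(1,2) b] .
    have "qline (mat_app g u) \<in> fixpts A \<inter> fixpts B" using gA gB by blast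
    moreover have "fixpts A \<inter> fixpts B = {P}" using X Y XY by blast
    ultimately have "qline (mat_app g u) = qline u" using u(3) by simp
    then obtain m where m: "m \<noteq> 0" "mat_app g u = vscale u m" using qline_eqD by metis
    have uv: "qline u \<noteq> qline v" using X(1) u(3) v(3) by simp
    have fA: "fixpts A = {qline u, qline v}" using X(2) u(3) v(3) by simp
    show False
      using dir1[OF assms(1) g(1) g(2) u(1,2) v(1,2) uv fA m] .
  qed
next
  assume eq: "fixpts A = fixpts B"
  obtain P where P: "P \<in> fixpts A" using assms(5) by blast
  obtain X where X: "X \<noteq> P" "fixpts A = {P, X}"
    using card2_split[OF _ _ P(1)] assms(3) unfolding hyperbolic_def by blast
  obtain u where u: "u \<noteq> vzero" "hform u u = 0" "P = qline u" using FP_elim[OF P(1)] by blast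
  obtain v where v: "v \<noteq> vzero" "hform v v = 0" "X = qline v"
    using FP_elim[of X A] X by blast
  have uv: "qline u \<noteq> qline v" using X(1) u(3) v(3) by simp
  have fA: "fixpts A = {qline u, qline v}" using X(2) u(3) v(3) by simp
  have fB: "fixpts B = {qline u, qline v}" using fA eq by simp
  show "strongly_doubly_reversible A B"
    using dir2[OF assms(1,2) u(1,2) v(1,2) uv fA fB] .
qed
end
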